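(* Let $X$ be a Banach space with a (Schauder) basis $(x_i)$. Then for every $n\in\mathbb{N}$ there is an equivalent norm $|\cdot|_n$ on $X$ such that, in $(X,|\cdot|_n)$, the basis $(x_i)$ is block $n$-unconditional with constant $2$.
   Context: A basic sequence $(x_i)$ is block $n$-unconditional with constant $K$ if every block basis $(y_i)_{i=1}^n$ of $(x_i)$ of length $n$ satisfies $\|\sum_{i=1}^n \pm a_i y_i\|\le K\|\sum_{i=1}^n a_iy_i\|$ for all real scalars $(a_i)_{i=1}^n$ and all choices of signs. *)

theory Defs
  imports "HOL-Analysis.Analysis"
begin

definition schauder_basis :: "(nat \<Rightarrow> 'a::banach) \<Rightarrow> bool" where
  "schauder_basis x \<longleftrightarrow>
     (\<forall>v. \<exists>!a::nat \<Rightarrow> real. (\<lambda>m. \<Sum>i<m. a i *\<^sub>R x i) \<longlonglongrightarrow> v)"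

definition is_norm :: "('a::real_vector \<Rightarrow> real) \<Rightarrow> bool" where
  "is_norm N \<longleftrightarrow>
     (\<forall>v. 0 \<le> N v) \<and> (\<forall>v. N v = 0 \<longleftrightarrow> v = 0) \<and>
     (\<forall>c v. N (c *\<^sub>R v) = \<bar>c\<bar> * N v) \<and>
     (\<forall>v w. N (v + w) \<le> N v + N w)"

definition equivalent_norm :: "('a::real_normed_vector \<Rightarrow> real) \<Rightarrow> bool" where
  "equivalent_norm N \<longleftrightarrow> is_norm N \<and>
     (\<exists>c C. 0 < c \<and> 0 < C \<and> (\<forall>v. c * norm v \<le> N v \<and> N v \<le> C * norm v))"

definition block_basis_of :: "(nat \<Rightarrow> 'a::real_vector) \<Rightarrow> nat \<Rightarrow> (nat \<Rightarrow> 'a) \<Rightarrow> bool" where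
  "block_basis_of x n y \<longleftrightarrow>
     (\<exists>p::nat \<Rightarrow> nat. \<exists>b::nat \<Rightarrow> real. strict_mono p \<and>
        (\<forall>k<n. y k = (\<Sum>i\<in>{p k..<p (Suc k)}. b i *\<^sub>R x i) \<and> y k \<noteq> 0))"

definition block_n_unconditional ::
  "('a::real_vector \<Rightarrow> real) \<Rightarrow> (nat \<Rightarrow> 'a) \<Rightarrow> nat \<Rightarrow> real \<Rightarrow> bool" where
  "block_n_unconditional N x n K \<longleftrightarrow>
     (\<forall>y. block_basis_of x n y \<longrightarrow>
        (\<forall>(a::nat \<Rightarrow> real) (\<epsilon>::nat \<Rightarrow> real). (\<forall>k<n. \<epsilon> k \<in> {-1, 1}) \<longrightarrow>
           N (\<Sum>k<n. (\<epsilon> k * a k) *\<^sub>R y k) \<le> K * N (\<Sum>k<n. a k *\<^sub>R y k)))"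

end

theory Submission
  imports Defs
begin


locale sbasis =
  fixes x :: "nat \<Rightarrow> 'a::banach"
  assumes sb: "schauder_basis x"
begin

definition coef :: "'a \<Rightarrow> nat \<Rightarrow> real" where
  "coef v = (THE a. (\<lambda>m. \<Sum>i<m. a i *\<^sub>R x i) \<longlonglongrightarrow> v)"

lemma coef_conv: "(\<lambda>m. \<Sum>i<m. coef v i *\<^sub>R x i) \<longlonglongrightarrow> v"
proof -
  have "\<exists>!a. (\<lambda>m. \<Sum>i<m. a i *\<^sub>R x i) \<longlonglongrightarrow> v" using sb unfolding schauder_basis_def by blast
  then show ?thesis unfolding coef_def by (rule theI')
qed

lemma coef_unique:
  assumes "(\<lambda>m. \<Sum>i<m. a i *\<^sub>R x i) \<longlonglongrightarrow> v"
  shows "coef v = a"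
proof -
  have "\<exists>!a. (\<lambda>m. \<Sum>i<m. a i *\<^sub>R x i) \<longlonglongrightarrow> v" using sb unfolding schauder_basis_def by blast
  then show ?thesis unfolding coef_def
    using the1_equality[where P="\<lambda>a. (\<lambda>m. \<Sum>i<m. a i *\<^sub>R x i) \<longlonglongrightarrow> v"] assms by blast
qed

lemma coef_add: "coef (v + w) = (\<lambda>i. coef v i + coef w i)"
proof (rule coef_unique)
  have "(\<lambda>m. (\<Sum>i<m. coef v i *\<^sub>R x i) + (\<Sum>i<m. coef w i *\<^sub>R x i)) \<longlonglongrightarrow> v + w"
    by (intro tendsto_add coef_conv)
  then show "(\<lambda>m. \<Sum>i<m. (coef v i + coef w i) *\<^sub>R x i) \<longlonglongrightarrow> v + w"
    by (simp add: scaleR_add_left sum.distrib)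
qed

lemma coef_scale: "coef (c *\<^sub>R v) = (\<lambda>i. c * coef v i)"
proof (rule coef_unique)
  have "(\<lambda>m. c *\<^sub>R (\<Sum>i<m. coef v i *\<^sub>R x i)) \<longlonglongrightarrow> c *\<^sub>R v"
    by (intro tendsto_scaleR tendsto_const coef_conv)
  then show "(\<lambda>m. \<Sum>i<m. (c * coef v i) *\<^sub>R x i) \<longlonglongrightarrow> c *\<^sub>R v"
    by (simp add: scaleR_sum_right)
qed

lemma coef_diff: "coef (v - w) = (\<lambda>i. coef v i - coef w i)"
  using coef_add[of v "(-1) *\<^sub>R w"] coef_scale[of "-1" w] by simp

lemma coef_zero: "coef 0 = (\<lambda>i. 0)"
  using coef_scale[of 0 0] by simp

lemma coef_fin:
  assumes "finite A"
  shows "coef (\<Sum>i\<in>A. c i *\<^sub>R x i) = (\<lambda>i. if i \<in> A then c i else 0)"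
proof (rule coef_unique)
  obtain L where L: "\<forall>i\<in>A. i < L" using assms finite_nat_bounded by blast
  have "(\<Sum>i<m. (if i \<in> A then c i else 0) *\<^sub>R x i) = (\<Sum>i\<in>A. c i *\<^sub>R x i)" if "m \<ge> L" for m
  proof -
    have "(\<Sum>i<m. (if i \<in> A then c i else 0) *\<^sub>R x i) = (\<Sum>i<m. (if i \<in> A then c i *\<^sub>R x i else 0))"
      by (intro sum.cong) auto
    also have "\<dots> = (\<Sum>i\<in>{..<m} \<inter> A. c i *\<^sub>R x i)"
      by (simp add: sum.inter_restrict)
    also have "{..<m} \<inter> A = A" using L that by auto
    finally show ?thesis .
  qed
  then show "(\<lambda>m. \<Sum>i<m. (if i \<in> A then c i else 0) *\<^sub>R x i) \<longlonglongrightarrow> (\<Sum>i\<in>A. c i *\<^sub>R x i)"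
    by (intro tendsto_eventually eventually_sequentiallyI[of L]) auto
qed

lemma x_nonzero: "x m \<noteq> 0"
proof
  assume "x m = 0"
  have "(\<Sum>i\<in>{m}. 1 *\<^sub>R x i) = 0" using \<open>x m = 0\<close> by simp
  then have "coef 0 = (\<lambda>i. if i \<in> {m} then 1 else 0)" using coef_fin[of "{m}" "\<lambda>_. 1"] by simp
  then show False using coef_zero by (metis insertI1 zero_neq_one)
qed

definition S :: "nat \<Rightarrow> 'a \<Rightarrow> 'a" where
  "S m v = (\<Sum>i<m. coef v i *\<^sub>R x i)"

lemma S_conv: "(\<lambda>m. S m v) \<longlonglongrightarrow> v"
  unfolding S_def by (rule coef_conv)

lemma S_add: "S m (v + w) = S m v + S m w"
  by (simp add: S_def coef_add scaleR_add_left sum.distrib)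
lemma S_diff: "S m (v - w) = S m v - S m w"
  by (simp add: S_def coef_diff scaleR_diff_left sum_subtractf)
lemma S_scale: "S m (c *\<^sub>R v) = c *\<^sub>R S m v"
  by (simp add: S_def coef_scale scaleR_sum_right)
lemma S_0 [simp]: "S 0 v = 0" by (simp add: S_def)

lemma S_bdd: "bdd_above (range (\<lambda>m. norm (S m v)))"
proof -
  have "Bseq (\<lambda>m. S m v)" using S_conv convergent_imp_Bseq convergentI by blast
  then obtain K where "\<And>m. norm (S m v) \<le> K" unfolding Bseq_def by blast
  then show ?thesis by (intro bdd_aboveI2) auto
qed

definition tn :: "'a \<Rightarrow> real" where
  "tn v = (SUP m. norm (S m v))"

lemma tn_ge: "norm (S m v) \<le> tn v"
  unfolding tn_def by (rule cSUP_upper[OF _ S_bdd]) simp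

lemma tn_le: "(\<And>m. norm (S m v) \<le> B) \<Longrightarrow> tn v \<le> B"
  unfolding tn_def by (rule cSUP_least) auto

lemma norm_le_tn: "norm v \<le> tn v"
proof -
  have "(\<lambda>m. norm (S m v)) \<longlonglongrightarrow> norm v" by (intro tendsto_norm S_conv)
  then show ?thesis using tn_ge by (intro LIMSEQ_le_const2) auto
qed

lemma tn_nonneg: "0 \<le> tn v" by (metis norm_le_tn norm_ge_zero order_trans)

lemma tn_triangle: "tn (v + w) \<le> tn v + tn w"
  by (rule tn_le) (metis S_add add_mono norm_triangle_ineq order_trans tn_ge)

lemma tn_scale: "tn (c *\<^sub>R v) = \<bar>c\<bar> * tn v"
proof (rule antisym)
  show "tn (c *\<^sub>R v) \<le> \<bar>c\<bar> * tn v"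
    by (rule tn_le) (simp add: S_scale mult_left_mono tn_ge)
  show "\<bar>c\<bar> * tn v \<le> tn (c *\<^sub>R v)"
  proof (cases "c = 0")
    case True then show ?thesis by (simp add: tn_nonneg)
  next
    case False
    have "tn v \<le> \<bar>inverse c\<bar> * tn (c *\<^sub>R v)"
    proof (rule tn_le)
      fix m
      have "norm (S m v) = \<bar>inverse c\<bar> * norm (S m (c *\<^sub>R v))"
        using False by (simp add: S_scale abs_inverse)
      also have "\<dots> \<le> \<bar>inverse c\<bar> * tn (c *\<^sub>R v)" by (intro mult_left_mono tn_ge) simp
      finally show "norm (S m v) \<le> \<bar>inverse c\<bar> * tn (c *\<^sub>R v)" .
    qed
    then show ?thesis using False by (simp add: field_simps abs_inverse)
  qed
qed

lemma tn_minus: "tn (v - w) = tn (w - v)"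
  using tn_scale[of "-1" "v - w"] by simp

end

context sbasis begin

lemma coef_diff_S: "coef v i *\<^sub>R x i = S (Suc i) v - S i v"
  by (simp add: S_def)

lemma tn_complete:
  fixes u :: "nat \<Rightarrow> 'a"
  assumes cau: "\<And>e. e > 0 \<Longrightarrow> \<exists>J. \<forall>j\<ge>J. \<forall>l\<ge>J. tn (u j - u l) < e"
  shows "\<exists>v. \<forall>e>0. \<exists>J. \<forall>j\<ge>J. tn (u j - v) \<le> e"
proof -
  have cauS: "Cauchy (\<lambda>j. S m (u j))" for m
  proof (rule metric_CauchyI)
    fix e :: real assume "e > 0"
    then obtain J where J: "\<forall>j\<ge>J. \<forall>l\<ge>J. tn (u j - u l) < e" using cau by blast
    show "\<exists>M. \<forall>j\<ge>M. \<forall>l\<ge>M. dist (S m (u j)) (S m (u l)) < e"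
    proof (intro exI allI impI)
      fix j l assume "J \<le> j" "J \<le> l"
      have "dist (S m (u j)) (S m (u l)) = norm (S m (u j - u l))" by (simp add: dist_norm S_diff)
      also have "\<dots> \<le> tn (u j - u l)" by (rule tn_ge)
      also have "\<dots> < e" using J \<open>J \<le> j\<close> \<open>J \<le> l\<close> by blast
      finally show "dist (S m (u j)) (S m (u l)) < e" .
    qed
  qed
  define W where "W m = lim (\<lambda>j. S m (u j))" for m
  have W: "(\<lambda>j. S m (u j)) \<longlonglongrightarrow> W m" for m
    unfolding W_def using cauS Cauchy_convergent convergent_LIMSEQ_iff by blast
  have unif: "\<exists>J. \<forall>j\<ge>J. \<forall>m. norm (S m (u j) - W m) \<le> e" if "e > 0" for e
  proof -
    obtain J where J: "\<forall>j\<ge>J. \<forall>l\<ge>J. tn (u j - u l) < e" using cau \<open>e > 0\<close> by blast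
    show ?thesis
    proof (intro exI allI impI)
      fix j m assume "J \<le> j"
      have "(\<lambda>l. norm (S m (u j) - S m (u l))) \<longlonglongrightarrow> norm (S m (u j) - W m)"
        by (intro tendsto_norm tendsto_diff tendsto_const W)
      moreover have "\<forall>l\<ge>J. norm (S m (u j) - S m (u l)) \<le> e"
      proof (intro allI impI)
        fix l assume "J \<le> l"
        have "norm (S m (u j) - S m (u l)) = norm (S m (u j - u l))" by (simp add: S_diff)
        also have "\<dots> \<le> tn (u j - u l)" by (rule tn_ge)
        also have "\<dots> \<le> e" using J \<open>J \<le> j\<close> \<open>J \<le> l\<close> by (simp add: less_imp_le)
        finally show "norm (S m (u j) - S m (u l)) \<le> e" .
      qed
      ultimately show "norm (S m (u j) - W m) \<le> e"
        by (intro LIMSEQ_le_const2) auto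
    qed
  qed
  have coefc: "\<exists>c. W (Suc i) - W i = c *\<^sub>R x i" for i
  proof -
    have lim1: "(\<lambda>j. coef (u j) i *\<^sub>R x i) \<longlonglongrightarrow> W (Suc i) - W i"
      unfolding coef_diff_S by (intro tendsto_diff W)
    have xn: "norm (x i) > 0" using x_nonzero by simp
    have "Cauchy (\<lambda>j. coef (u j) i)"
    proof (rule metric_CauchyI)
      fix e :: real assume "e > 0"
      have "Cauchy (\<lambda>j. coef (u j) i *\<^sub>R x i)" using lim1 LIMSEQ_imp_Cauchy by blast
      then obtain M where M: "\<forall>j\<ge>M. \<forall>l\<ge>M. dist (coef (u j) i *\<^sub>R x i) (coef (u l) i *\<^sub>R x i) < e * norm (x i)"
        using \<open>e > 0\<close> xn metric_CauchyD by (metis mult_pos_pos)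
      show "\<exists>M. \<forall>j\<ge>M. \<forall>l\<ge>M. dist (coef (u j) i) (coef (u l) i) < e"
      proof (intro exI allI impI)
        fix j l assume "M \<le> j" "M \<le> l"
        then have "dist (coef (u j) i *\<^sub>R x i) (coef (u l) i *\<^sub>R x i) < e * norm (x i)" using M by blast
        also have "dist (coef (u j) i *\<^sub>R x i) (coef (u l) i *\<^sub>R x i) = dist (coef (u j) i) (coef (u l) i) * norm (x i)"
          by (simp add: dist_norm flip: scaleR_diff_left)
        finally show "dist (coef (u j) i) (coef (u l) i) < e" using xn by simp
      qed
    qed
    then obtain c where "(\<lambda>j. coef (u j) i) \<longlonglongrightarrow> c" using Cauchy_convergent_iff convergent_def by blast
    then have "(\<lambda>j. coef (u j) i *\<^sub>R x i) \<longlonglongrightarrow> c *\<^sub>R x i" by (intro tendsto_scaleR tendsto_const)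
    with lim1 have "W (Suc i) - W i = c *\<^sub>R x i" using LIMSEQ_unique by blast
    then show ?thesis by blast
  qed
  then obtain c where c: "\<And>i. W (Suc i) - W i = c i *\<^sub>R x i" by metis
  have W0: "W 0 = 0" using W[of 0] by (simp add: LIMSEQ_const_iff)
  have Wsum: "W m = (\<Sum>i<m. c i *\<^sub>R x i)" for m
  proof (induction m)
    case 0 then show ?case by (simp add: W0)
  next
    case (Suc m)
    then show ?case using c[of m] by (simp add: algebra_simps)
  qed
  have "Cauchy W"
  proof (rule metric_CauchyI)
    fix e :: real assume "e > 0"
    then obtain J where J: "\<forall>j\<ge>J. \<forall>m. norm (S m (u j) - W m) \<le> e / 3" using unif[of "e/3"] by auto
    have "Cauchy (\<lambda>m. S m (u J))" using S_conv LIMSEQ_imp_Cauchy by blast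
    then obtain M where M: "\<forall>m\<ge>M. \<forall>l\<ge>M. dist (S m (u J)) (S l (u J)) < e / 3"
      using \<open>e > 0\<close> metric_CauchyD by (metis divide_pos_pos zero_less_numeral)
    show "\<exists>M. \<forall>m\<ge>M. \<forall>l\<ge>M. dist (W m) (W l) < e"
    proof (intro exI allI impI)
      fix m l assume "M \<le> m" "M \<le> l"
      have "dist (W m) (W l) \<le> dist (W m) (S m (u J)) + dist (S m (u J)) (S l (u J)) + dist (S l (u J)) (W l)"
        by (meson dist_triangle order_trans add_right_mono)
      also have "\<dots> < e/3 + e/3 + e/3"
        using J[rule_format, of J m] J[rule_format, of J l] M \<open>M \<le> m\<close> \<open>M \<le> l\<close>
        by (intro add_less_le_mono add_le_less_mono) (auto simp: dist_norm norm_minus_commute)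
      finally show "dist (W m) (W l) < e" by simp
    qed
  qed
  then obtain v where v: "W \<longlonglongrightarrow> v" using Cauchy_convergent_iff convergent_def by blast
  have "(\<lambda>m. \<Sum>i<m. c i *\<^sub>R x i) = W" by (rule ext) (simp add: Wsum)
  then have "coef v = c" using v by (intro coef_unique) simp
  then have Sv: "S m v = W m" for m by (simp add: S_def Wsum)
  show ?thesis
  proof (rule exI[of _ v], intro allI impI)
    fix e :: real assume "e > 0"
    then obtain J where J: "\<forall>j\<ge>J. \<forall>m. norm (S m (u j) - W m) \<le> e" using unif by blast
    show "\<exists>J. \<forall>j\<ge>J. tn (u j - v) \<le> e"
    proof (intro exI[of _ J] allI impI)
      fix j assume "J \<le> j"
      show "tn (u j - v) \<le> e"
        by (rule tn_le) (use J \<open>J \<le> j\<close> in \<open>simp add: S_diff Sv\<close>)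
    qed
  qed
qed

end


lemma pow_small:
  fixes c e :: real
  assumes "c \<ge> 0" "e > 0"
  shows "\<exists>J. \<forall>j\<ge>J. c / 2^j < e"
proof -
  obtain J :: nat where J: "c / e < real J" using reals_Archimedean2 by blast
  show ?thesis
  proof (intro exI allI impI)
    fix j assume "J \<le> j"
    have "real J \<le> real j" using \<open>J \<le> j\<close> by simp
    also have "real j < real (2 ^ j)" by (simp only: of_nat_less_iff less_exp)
    also have "real (2 ^ j) = (2::real) ^ j" by simp
    finally have "c / e < 2 ^ j" using J by linarith
    then show "c / 2 ^ j < e" using assms by (simp add: field_simps)
  qed
qed

lemma geom_sum: "(\<Sum>i<m. (c::real) / 2^i) = 2 * c - 2 * c / 2^m"
  by (induction m) (auto simp: field_simps)

context sbasis begin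

lemma tn_uminus: "tn (- v) = tn v" using tn_scale[of "-1" v] by simp

lemma tn_zero: "tn 0 = 0" using tn_scale[of 0 0] by simp

lemma tn_sum: "tn (\<Sum>i<(m::nat). f i) \<le> (\<Sum>i<m. tn (f i))"
proof (induction m)
  case 0 then show ?case by (simp add: tn_zero)
next
  case (Suc m) then show ?case using tn_triangle[of "sum f {..<m}" "f m"] by simp
qed

lemma baire_step: "\<exists>k::nat. interior (closure {v. tn v \<le> real k}) \<noteq> {}"
proof (rule ccontr)
  assume H: "\<not> ?thesis"
  define E where "E k = closure {v. tn v \<le> real k}" for k :: nat
  have "euclidean interior_of \<Union>(range E) = {}"
  proof (rule Baire_category_alt)
    show "completely_metrizable_space (euclidean :: 'a topology) \<or> locally_compact_space (euclidean :: 'a topology) \<and> regular_space (euclidean :: 'a topology)"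
      using completely_metrizable_space_euclidean by blast
    show "countable (range E)" by simp
    fix T assume "T \<in> range E"
    then obtain k where k: "T = E k" by blast
    have "closed T" unfolding k E_def by simp
    moreover have "interior T = {}" using H unfolding k E_def by blast
    ultimately show "closedin euclidean T \<and> euclidean interior_of T = {}"
      using closed_closedin[of T] euclidean_interior_of[of T] by (simp only:)
  qed
  moreover have "\<Union>(range E) = UNIV"
  proof -
    have "v \<in> E (nat \<lceil>tn v\<rceil>)" for v
    proof -
      have "tn v \<le> real (nat \<lceil>tn v\<rceil>)" by (rule real_nat_ceiling_ge)
      then have "v \<in> {u. tn u \<le> real (nat \<lceil>tn v\<rceil>)}" by simp
      then show ?thesis unfolding E_def using closure_subset by (rule rev_subsetD)
    qed
    then show ?thesis by blast
  qed
  ultimately have "interior (UNIV::'a set) = {}" by simp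
  then show False by simp
qed

lemma approx_step: "\<exists>M\<ge>0. \<forall>w \<delta>. \<delta> > 0 \<longrightarrow> (\<exists>u. tn u \<le> M * norm w \<and> norm (w - u) < \<delta>)"
proof -
  obtain k :: nat where "interior (closure {v. tn v \<le> real k}) \<noteq> {}" using baire_step by blast
  then obtain v0 where "v0 \<in> interior (closure {v. tn v \<le> real k})" by blast
  then have "\<exists>r>0. ball v0 r \<subseteq> closure {v. tn v \<le> real k}" unfolding mem_interior .
  then obtain r where r: "r > 0" "ball v0 r \<subseteq> closure {v. tn v \<le> real k}" by blast
  have base: "\<exists>u. tn u \<le> 2 * k \<and> norm (w - u) < \<delta>" if "norm w < r" "\<delta> > 0" for w \<delta>
  proof -
    have d2: "\<delta>/2 > 0" using that by simp
    have "v0 + w \<in> ball v0 r" using that by (simp add: dist_norm)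
    then have "v0 + w \<in> closure {v. tn v \<le> real k}" using r(2) by (rule subsetD[rotated])
    then have "\<forall>e>0. \<exists>y\<in>{v. tn v \<le> real k}. dist y (v0 + w) < e" unfolding closure_approachable .
    then obtain a1 where a1: "a1 \<in> {v. tn v \<le> real k}" "dist a1 (v0 + w) < \<delta>/2"
      using d2 by blast
    have "v0 \<in> ball v0 r" using r(1) by simp
    then have "v0 \<in> closure {v. tn v \<le> real k}" using r(2) by (rule subsetD[rotated])
    then have "\<forall>e>0. \<exists>y\<in>{v. tn v \<le> real k}. dist y v0 < e" unfolding closure_approachable .
    then obtain a0 where a0: "a0 \<in> {v. tn v \<le> real k}" "dist a0 v0 < \<delta>/2"
      using d2 by blast
    have "tn (a1 - a0) \<le> tn a1 + tn (- a0)" using tn_triangle[of a1 "- a0"] by simp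
    moreover have "tn a1 \<le> k" "tn a0 \<le> k" using a0 a1 by auto
    ultimately have "tn (a1 - a0) \<le> 2 * k" using tn_uminus[of a0] by linarith
    moreover have "norm (w - (a1 - a0)) < \<delta>"
    proof -
      have "w - (a1 - a0) = (v0 + w - a1) - (v0 - a0)" by (simp add: algebra_simps)
      then have "norm (w - (a1 - a0)) \<le> norm (v0 + w - a1) + norm (v0 - a0)"
        using norm_triangle_ineq4[of "v0 + w - a1" "v0 - a0"] by (simp only:)
      have "norm (v0 + w - a1) = dist a1 (v0 + w)" by (simp add: dist_norm norm_minus_commute)
      moreover have "norm (v0 - a0) = dist a0 v0" by (simp add: dist_norm norm_minus_commute)
      ultimately have "norm (v0 + w - a1) + norm (v0 - a0) < \<delta>/2 + \<delta>/2"
        using a0(2) a1(2) by simp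
      then have "norm (w - (a1 - a0)) < \<delta>/2 + \<delta>/2" using \<open>norm (w - (a1 - a0)) \<le> _\<close> by linarith
      then show ?thesis by simp
    qed
    ultimately show ?thesis by blast
  qed
  define M where "M = 4 * k / r"
  have "M \<ge> 0" unfolding M_def using r by simp
  moreover have Mstep: "\<exists>u. tn u \<le> M * norm w \<and> norm (w - u) < \<delta>" if "\<delta> > 0" for w \<delta>
  proof (cases "w = 0")
    case True then show ?thesis using that by (intro exI[of _ 0]) (simp add: tn_zero)
  next
    case False
    then have nw: "norm w > 0" by simp
    define t where "t = r / (2 * norm w)"
    have t: "t > 0" unfolding t_def using r nw by simp
    have "norm (t *\<^sub>R w) < r" using nw r t by (simp add: t_def)
    moreover have "\<delta> * t > 0" using that t by simp
    ultimately obtain u' where u': "tn u' \<le> 2 * k" "norm (t *\<^sub>R w - u') < \<delta> * t"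
      using base by blast
    have "tn (inverse t *\<^sub>R u') = inverse t * tn u'" using t by (simp add: tn_scale)
    also have "\<dots> \<le> inverse t * (2 * k)" using u' t by (simp add: mult_left_mono)
    also have "\<dots> = M * norm w" unfolding M_def t_def using r nw by (simp add: field_simps)
    finally have 1: "tn (inverse t *\<^sub>R u') \<le> M * norm w" .
    have "w - inverse t *\<^sub>R u' = inverse t *\<^sub>R (t *\<^sub>R w - u')" using t by (simp add: algebra_simps)
    then have "norm (w - inverse t *\<^sub>R u') = inverse t * norm (t *\<^sub>R w - u')" using t by simp
    also have "\<dots> < inverse t * (\<delta> * t)" using u' t by (intro mult_strict_left_mono) auto
    also have "\<dots> = \<delta>" using t by simp
    finally show ?thesis using 1 by blast
  qed
  ultimately show ?thesis by (intro exI[of _ M] conjI allI impI Mstep)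
qed

end

context sbasis begin

lemma bounded_inverse: "\<exists>K>0. \<forall>v. tn v \<le> K * norm v"
proof -
  obtain M where M: "M \<ge> 0" "\<And>w \<delta>. \<delta> > 0 \<Longrightarrow> \<exists>u. tn u \<le> M * norm w \<and> norm (w - u) < \<delta>"
    using approx_step by blast
  define U where "U w \<delta> = (SOME u. tn u \<le> M * norm w \<and> norm (w - u) < \<delta>)" for w \<delta>
  have U: "tn (U w \<delta>) \<le> M * norm w \<and> norm (w - U w \<delta>) < \<delta>" if "\<delta> > 0" for w \<delta>
    unfolding U_def using M(2)[OF that, of w] by (rule someI_ex)
  have main: "tn w \<le> 2 * M * norm w" for w
  proof (cases "w = 0")
    case True then show ?thesis by (simp add: tn_zero)
  next
    case False
    define d where "d = norm w"
    have d: "d > 0" using False by (simp add: d_def)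
    define ws where "ws = rec_nat w (\<lambda>j wj. wj - U wj (d / 2^Suc j))"
    have ws0: "ws 0 = w" by (simp add: ws_def)
    define u where "u j = U (ws j) (d / 2^Suc j)" for j
    have wsS: "ws (Suc j) = ws j - u j" for j by (simp add: ws_def u_def)
    have Uj: "tn (u j) \<le> M * norm (ws j) \<and> norm (ws (Suc j)) < d / 2^Suc j" for j
    proof -
      have "d / 2^Suc j > 0" using d by simp
      from U[OF this, of "ws j"] show ?thesis by (simp add: wsS u_def)
    qed
    have nws: "norm (ws j) \<le> d / 2^j" for j
    proof (cases j)
      case 0 then show ?thesis by (simp add: ws0 d_def)
    next
      case (Suc i) then show ?thesis using Uj[of i] by simp
    qed
    have tnu: "tn (u j) \<le> M * d / 2^j" for j
    proof -
      have "tn (u j) \<le> M * norm (ws j)" using Uj by blast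
      also have "\<dots> \<le> M * (d / 2^j)" using nws M(1) by (intro mult_left_mono) auto
      finally show ?thesis by simp
    qed
    define P where "P J = (\<Sum>j<J. u j)" for J
    have P: "P J = w - ws J" for J
    proof (induction J)
      case 0 then show ?case by (simp add: P_def ws0)
    next
      case (Suc J) then show ?case by (simp add: P_def wsS)
    qed
    have tnP: "tn (P J) \<le> 2 * M * d" for J
    proof -
      have "tn (P J) \<le> (\<Sum>j<J. tn (u j))" unfolding P_def by (rule tn_sum)
      also have "\<dots> \<le> (\<Sum>j<J. M * d / 2^j)" by (intro sum_mono tnu)
      also have "\<dots> = 2 * (M * d) - 2 * (M * d) / 2^J" by (rule geom_sum)
      also have "\<dots> \<le> 2 * M * d" using M(1) d by simp
      finally show ?thesis .
    qed
    have tail: "tn (P (J + m) - P J) \<le> 2 * M * d / 2^J - 2 * M * d / 2^(J + m)" for J m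
    proof (induction m)
      case 0 then show ?case by (simp add: tn_zero)
    next
      case (Suc m)
      have "P (J + Suc m) - P J = (P (J + m) - P J) + u (J + m)" by (simp add: P_def)
      then have "tn (P (J + Suc m) - P J) \<le> tn (P (J + m) - P J) + tn (u (J + m))"
        using tn_triangle[of "P (J + m) - P J" "u (J + m)"] by metis
      also have "\<dots> \<le> (2 * M * d / 2^J - 2 * M * d / 2^(J + m)) + M * d / 2^(J + m)"
        using Suc tnu[of "J + m"] by simp
      also have "\<dots> = 2 * M * d / 2^J - 2 * M * d / 2^(J + Suc m)"
        by (simp add: field_simps)
      finally show ?case .
    qed
    have tail2: "tn (P l - P j) \<le> 2 * M * d / 2^j" if "j \<le> l" for j l
    proof -
      obtain m where l: "l = j + m" using \<open>j \<le> l\<close> le_Suc_ex by blast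
      have "0 \<le> 2 * M * d / 2^(j + m)" using M(1) d by simp
      then show ?thesis using tail[of j m] l by simp
    qed
    have "\<exists>J. \<forall>j\<ge>J. \<forall>l\<ge>J. tn (P j - P l) < e" if "e > 0" for e
    proof -
      obtain J where J: "\<forall>j\<ge>J. 2 * M * d / 2^j < e" using pow_small[of "2 * M * d" e] M(1) d \<open>e > 0\<close> by auto
      show ?thesis
      proof (intro exI allI impI)
        fix j l assume jl: "J \<le> j" "J \<le> l"
        show "tn (P j - P l) < e"
        proof (cases "j \<le> l")
          case True
          then have "tn (P j - P l) \<le> 2 * M * d / 2^j" using tail2 tn_minus by metis
          then show ?thesis using J jl by fastforce
        next
          case False
          then have "tn (P j - P l) \<le> 2 * M * d / 2^l" using tail2[of l j] by simp
          then show ?thesis using J jl by fastforce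
        qed
      qed
    qed
    then obtain V where V: "\<forall>e>0. \<exists>J. \<forall>j\<ge>J. tn (P j - V) \<le> e"
      using tn_complete[of P] by blast
    have "P \<longlonglongrightarrow> V"
    proof (rule LIMSEQ_I)
      fix r :: real assume "r > 0"
      then obtain J where J: "\<forall>j\<ge>J. tn (P j - V) \<le> r / 2" using V by (meson half_gt_zero)
      show "\<exists>no. \<forall>n\<ge>no. norm (P n - V) < r"
      proof (intro exI allI impI)
        fix n assume "J \<le> n"
        then have "norm (P n - V) \<le> r / 2" using J norm_le_tn order_trans by blast
        then show "norm (P n - V) < r" using \<open>r > 0\<close> by simp
      qed
    qed
    moreover have "P \<longlonglongrightarrow> w"
    proof (rule LIMSEQ_I)
      fix r :: real assume "r > 0"
      then obtain J where J: "\<forall>j\<ge>J. d / 2^j < r" using pow_small[of d r] d by auto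
      show "\<exists>no. \<forall>n\<ge>no. norm (P n - w) < r"
      proof (intro exI allI impI)
        fix n assume "J \<le> n"
        have "norm (P n - w) = norm (ws n)" by (simp add: P)
        also have "\<dots> \<le> d / 2^n" by (rule nws)
        also have "\<dots> < r" using J \<open>J \<le> n\<close> by blast
        finally show "norm (P n - w) < r" .
      qed
    qed
    ultimately have Vw: "V = w" using LIMSEQ_unique by blast
    have "tn w \<le> 2 * M * d + e" if "e > 0" for e
    proof -
      obtain J where J: "tn (P J - w) \<le> e" using V Vw \<open>e > 0\<close> by blast
      have "tn w = tn ((w - P J) + P J)" by simp
      also have "\<dots> \<le> tn (w - P J) + tn (P J)" by (rule tn_triangle)
      also have "\<dots> \<le> e + 2 * M * d" using J tnP[of J] tn_minus[of w "P J"] by simp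
      finally show ?thesis by simp
    qed
    then show ?thesis unfolding d_def by (rule field_le_epsilon)
  qed
  show ?thesis
  proof (intro exI[of _ "2 * M + 1"] conjI allI)
    show "2 * M + 1 > 0" using M(1) by simp
    fix v
    have "tn v \<le> 2 * M * norm v" by (rule main)
    also have "\<dots> \<le> (2 * M + 1) * norm v" by (simp add: distrib_right)
    finally show "tn v \<le> (2 * M + 1) * norm v" .
  qed
qed

end


definition sp :: "nat \<Rightarrow> (nat \<Rightarrow> real) \<Rightarrow> bool" where
  "sp n g \<longleftrightarrow> (\<exists>s e. (\<forall>i. s \<le> i \<and> i < e \<longrightarrow> g i = 1 \<or> g i = -1) \<and>
     (\<forall>i. \<not> (s \<le> i \<and> i < e) \<longrightarrow> g i = 0) \<and>
     card {i. s < i \<and> i < e \<and> g i \<noteq> g (i - 1)} < n)"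

lemma split_point:
  fixes C :: "nat set"
  assumes "finite C" "card C + 2 \<le> 2 * n"
  shows "\<exists>t. card {c\<in>C. c < t} < n \<and> card {c\<in>C. t < c} < n"
proof (cases "card C < n")
  case True
  have "card {c\<in>C. (0::nat) < c} \<le> card C" using assms(1) by (intro card_mono) auto
  then show ?thesis using True by (intro exI[of _ 0]) auto
next
  case False
  obtain B where B: "\<forall>c\<in>C. c \<le> B" using assms(1) finite_nat_set_iff_bounded_le by blast
  have exB: "n \<le> card {c\<in>C. c \<le> B}" using False B by (metis (no_types, lifting) Collect_mem_eq mem_Collect_eq not_le subsetI subset_antisym Collect_subset)
  define t where "t = (LEAST t. n \<le> card {c\<in>C. c \<le> t})"
  have t1: "n \<le> card {c\<in>C. c \<le> t}" unfolding t_def using exB by (rule LeastI)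
  have t2: "card {c\<in>C. c < t} < n"
  proof (cases t)
    case 0 then show ?thesis using assms(2) by simp
  next
    case (Suc t')
    have "\<not> n \<le> card {c\<in>C. c \<le> t'}"
    proof
      assume "n \<le> card {c\<in>C. c \<le> t'}"
      then have "t \<le> t'" unfolding t_def by (rule Least_le)
      then show False using Suc by simp
    qed
    moreover have "{c\<in>C. c < t} = {c\<in>C. c \<le> t'}" using Suc by auto
    ultimately show ?thesis by simp
  qed
  have "C = {c\<in>C. c \<le> t} \<union> {c\<in>C. t < c}" by auto
  then have "card C = card {c\<in>C. c \<le> t} + card {c\<in>C. t < c}"
    using assms(1) by (metis (no_types, lifting) card_Un_disjoint disjoint_iff finite_Un mem_Collect_eq not_le)
  then have "card {c\<in>C. t < c} < n" using t1 assms(2) by linarith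
  then show ?thesis using t2 by blast
qed

lemma sp_restrict:
  assumes vals: "\<forall>i. s \<le> i \<and> i < e \<longrightarrow> g i = 1 \<or> g i = -1"
    and zero: "\<forall>i. \<not> (s \<le> i \<and> i < e) \<longrightarrow> g i = 0"
    and C: "C = {i. s < i \<and> i < e \<and> g i \<noteq> g (i - 1)}"
  shows "sp (Suc (card {c\<in>C. c < t})) (\<lambda>i. if i < t then g i else 0)"
    and "sp (Suc (card {c\<in>C. t < c})) (\<lambda>i. if t \<le> i then g i else 0)"
proof -
  have fin: "finite C" unfolding C by (rule finite_subset[of _ "{..<e}"]) auto
  let ?h = "\<lambda>i. if i < t then g i else 0"
  have "{i. s < i \<and> i < min e t \<and> ?h i \<noteq> ?h (i - 1)} \<subseteq> {c\<in>C. c < t}"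
    unfolding C by auto
  then have "card {i. s < i \<and> i < min e t \<and> ?h i \<noteq> ?h (i - 1)} \<le> card {c\<in>C. c < t}"
    using fin by (intro card_mono) auto
  then show "sp (Suc (card {c\<in>C. c < t})) ?h"
    unfolding sp_def using vals zero
    by (intro exI[of _ s] exI[of _ "min e t"]) auto
  let ?h = "\<lambda>i. if t \<le> i then g i else 0"
  have "{i. max s t < i \<and> i < e \<and> ?h i \<noteq> ?h (i - 1)} \<subseteq> {c\<in>C. t < c}"
    unfolding C by auto
  then have "card {i. max s t < i \<and> i < e \<and> ?h i \<noteq> ?h (i - 1)} \<le> card {c\<in>C. t < c}"
    using fin by (intro card_mono) auto
  then show "sp (Suc (card {c\<in>C. t < c})) ?h"
    unfolding sp_def using vals zero
    by (intro exI[of _ "max s t"] exI[of _ e]) auto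
qed

lemma sp_mono: "sp m g \<Longrightarrow> m \<le> n \<Longrightarrow> sp n g"
  unfolding sp_def by (meson order_less_le_trans)

lemma sp_prod_split:
  assumes "sp n g" "sp n h"
  shows "\<exists>h1 h2. sp n h1 \<and> sp n h2 \<and> (\<forall>i. g i * h i = h1 i + h2 i)"
proof -
  obtain s1 e1 where g: "\<forall>i. s1 \<le> i \<and> i < e1 \<longrightarrow> g i = 1 \<or> g i = -1"
    "\<forall>i. \<not> (s1 \<le> i \<and> i < e1) \<longrightarrow> g i = 0" "card {i. s1 < i \<and> i < e1 \<and> g i \<noteq> g (i - 1)} < n"
    using assms(1) unfolding sp_def by blast
  obtain s2 e2 where h: "\<forall>i. s2 \<le> i \<and> i < e2 \<longrightarrow> h i = 1 \<or> h i = -1"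
    "\<forall>i. \<not> (s2 \<le> i \<and> i < e2) \<longrightarrow> h i = 0" "card {i. s2 < i \<and> i < e2 \<and> h i \<noteq> h (i - 1)} < n"
    using assms(2) unfolding sp_def by blast
  define f where "f i = g i * h i" for i
  define s where "s = max s1 s2"
  define e where "e = min e1 e2"
  define C where "C = {i. s < i \<and> i < e \<and> f i \<noteq> f (i - 1)}"
  have vals: "\<forall>i. s \<le> i \<and> i < e \<longrightarrow> f i = 1 \<or> f i = -1"
    using g(1) h(1) unfolding s_def e_def f_def by fastforce
  have zero: "\<forall>i. \<not> (s \<le> i \<and> i < e) \<longrightarrow> f i = 0"
    using g(2) h(2) unfolding s_def e_def f_def by fastforce
  have sub: "C \<subseteq> {i. s1 < i \<and> i < e1 \<and> g i \<noteq> g (i - 1)} \<union> {i. s2 < i \<and> i < e2 \<and> h i \<noteq> h (i - 1)}"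
    unfolding C_def s_def e_def f_def by auto
  have "card C \<le> card {i. s1 < i \<and> i < e1 \<and> g i \<noteq> g (i - 1)} + card {i. s2 < i \<and> i < e2 \<and> h i \<noteq> h (i - 1)}"
    by (rule order_trans[OF card_mono[OF _ sub] card_Un_le]) auto
  then have cC: "card C + 2 \<le> 2 * n" using g(3) h(3) by linarith
  have fin: "finite C" unfolding C_def by (rule finite_subset[of _ "{..<e}"]) auto
  obtain t where t: "card {c\<in>C. c < t} < n" "card {c\<in>C. t < c} < n"
    using split_point[OF fin cC] by blast
  have 1: "sp n (\<lambda>i. if i < t then f i else 0)"
    using sp_mono[OF sp_restrict(1)[OF vals zero C_def, of t]] t(1) by (simp add: Suc_le_eq)
  have 2: "sp n (\<lambda>i. if t \<le> i then f i else 0)"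
    using sp_mono[OF sp_restrict(2)[OF vals zero C_def, of t]] t(2) by (simp add: Suc_le_eq)
  show ?thesis using 1 2
    by (intro exI[of _ "\<lambda>i. if i < t then f i else 0"] exI[of _ "\<lambda>i. if t \<le> i then f i else 0"] conjI)
      (auto simp: f_def)
qed



lemma sp_vals: "sp n g \<Longrightarrow> g i = 1 \<or> g i = -1 \<or> g i = 0"
  unfolding sp_def by metis

lemma sp_bound: "sp n g \<Longrightarrow> \<exists>L. \<forall>i\<ge>L. g i = 0"
  unfolding sp_def by (metis not_le)

lemma sp_zero: "n \<ge> 1 \<Longrightarrow> sp n (\<lambda>_. 0)"
  unfolding sp_def by (intro exI[of _ 0] exI[of _ 0]) auto

lemma sp_ind: "n \<ge> 1 \<Longrightarrow> sp n (\<lambda>i. if i < m then 1 else 0)"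
proof -
  assume n: "n \<ge> 1"
  let ?g = "\<lambda>i::nat. if i < m then 1 else (0::real)"
  have E: "{i. 0 < i \<and> i < m \<and> ?g i \<noteq> ?g (i - 1)} = {}" by auto
  have c: "card {i. 0 < i \<and> i < m \<and> ?g i \<noteq> ?g (i - 1)} < n" unfolding E using n by simp
  have v: "\<forall>i. 0 \<le> i \<and> i < m \<longrightarrow> ?g i = 1 \<or> ?g i = -1" by simp
  have z: "\<forall>i. \<not> (0 \<le> i \<and> i < m) \<longrightarrow> ?g i = 0" by simp
  show ?thesis unfolding sp_def using c v z by blast
qed

context sbasis begin

definition Mop :: "(nat \<Rightarrow> real) \<Rightarrow> 'a \<Rightarrow> 'a" where
  "Mop g v = (\<Sum>i | g i \<noteq> 0. (g i * coef v i) *\<^sub>R x i)"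

lemma Mop_eq:
  assumes "\<forall>i\<ge>L. g i = 0"
  shows "Mop g v = (\<Sum>i<L. (g i * coef v i) *\<^sub>R x i)"
  unfolding Mop_def
proof (rule sum.mono_neutral_left)
  show "finite {..<L}" by simp
  show "{i. g i \<noteq> 0} \<subseteq> {..<L}" using assms not_le by auto
  show "\<forall>i\<in>{..<L} - {i. g i \<noteq> 0}. (g i * coef v i) *\<^sub>R x i = 0" by simp
qed

lemma Mop_add_v: "Mop g (v + w) = Mop g v + Mop g w"
  by (simp add: Mop_def coef_add distrib_left scaleR_add_left sum.distrib)

lemma Mop_scale_v: "Mop g (c *\<^sub>R v) = c *\<^sub>R Mop g v"
  by (simp add: Mop_def coef_scale scaleR_sum_right algebra_simps)

lemma Mop_zero_v: "Mop g 0 = 0"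
  by (simp add: Mop_def coef_zero)

lemma Mop_comp:
  assumes "\<forall>i\<ge>L. g i = 0" "\<forall>i\<ge>L. h i = 0"
  shows "Mop g (Mop h v) = Mop (\<lambda>i. g i * h i) v"
proof -
  have c: "coef (Mop h v) = (\<lambda>i. if i \<in> {..<L} then h i * coef v i else 0)"
    unfolding Mop_eq[OF assms(2)] by (rule coef_fin) simp
  have "Mop g (Mop h v) = (\<Sum>i<L. (g i * coef (Mop h v) i) *\<^sub>R x i)" by (rule Mop_eq[OF assms(1)])
  also have "\<dots> = (\<Sum>i<L. (g i * h i * coef v i) *\<^sub>R x i)" by (intro sum.cong) (auto simp: c)
  also have "\<dots> = Mop (\<lambda>i. g i * h i) v" using assms(1) by (intro Mop_eq[symmetric]) simp
  finally show ?thesis .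
qed

lemma Mop_sum:
  assumes "\<forall>i\<ge>L. g i = 0" "\<forall>i\<ge>L. h i = 0"
  shows "Mop (\<lambda>i. g i + h i) v = Mop g v + Mop h v"
proof -
  have "Mop (\<lambda>i. g i + h i) v = (\<Sum>i<L. ((g i + h i) * coef v i) *\<^sub>R x i)"
    using assms by (intro Mop_eq) simp
  also have "\<dots> = (\<Sum>i<L. (g i * coef v i) *\<^sub>R x i) + (\<Sum>i<L. (h i * coef v i) *\<^sub>R x i)"
    by (simp add: distrib_right scaleR_add_left sum.distrib)
  also have "\<dots> = Mop g v + Mop h v" using Mop_eq[OF assms(1)] Mop_eq[OF assms(2)] by simp
  finally show ?thesis .
qed

lemma Mop_ind: "Mop (\<lambda>i. if i < m then 1 else 0) v = S m v"
  by (subst Mop_eq[of m]) (auto simp: S_def)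

lemma abel:
  "(\<Sum>i<L. g i *\<^sub>R (S (Suc i) v - S i v)) =
     (\<Sum>i<L. ((if i = 0 then 0 else g (i - 1)) - g i) *\<^sub>R S i v) + (if L = 0 then 0 else g (L - 1)) *\<^sub>R S L v"
proof (induction L)
  case 0 then show ?case by simp
next
  case (Suc L) then show ?case by (simp add: algebra_simps)
qed

lemma S_bound: "\<exists>K>0. \<forall>m v. norm (S m v) \<le> K * norm v"
  using bounded_inverse tn_ge order_trans by meson

lemma sp_norm_bound:
  assumes K: "\<And>m v. norm (S m v) \<le> K * norm v" "K \<ge> 0" and g: "sp n g"
  shows "norm (Mop g v) \<le> 2 * (real n + 1) * K * norm v"
proof -
  obtain s e where vals: "\<forall>i. s \<le> i \<and> i < e \<longrightarrow> g i = 1 \<or> g i = -1"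
    and zero: "\<forall>i. \<not> (s \<le> i \<and> i < e) \<longrightarrow> g i = 0"
    and cC: "card {i. s < i \<and> i < e \<and> g i \<noteq> g (i - 1)} < n"
    using g unfolding sp_def by blast
  define L where "L = Suc e"
  define d where "d i = (if i = 0 then 0 else g (i - 1)) - g i" for i
  have gL: "\<forall>i\<ge>L. g i = 0" using zero unfolding L_def by auto
  have "Mop g v = (\<Sum>i<L. g i *\<^sub>R (S (Suc i) v - S i v))"
    unfolding Mop_eq[OF gL] by (intro sum.cong) (simp_all add: S_def)
  also have "\<dots> = (\<Sum>i<L. d i *\<^sub>R S i v)"
    unfolding abel d_def using zero by (simp add: L_def)
  finally have Meq: "Mop g v = (\<Sum>i<L. d i *\<^sub>R S i v)" .
  have "norm (Mop g v) \<le> (\<Sum>i<L. norm (d i *\<^sub>R S i v))" unfolding Meq by (rule norm_sum)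
  also have "\<dots> \<le> (\<Sum>i<L. \<bar>d i\<bar> * (K * norm v))"
    by (intro sum_mono) (simp add: K(1) mult_left_mono)
  also have "\<dots> = (\<Sum>i<L. \<bar>d i\<bar>) * (K * norm v)" by (simp add: sum_distrib_right)
  also have "(\<Sum>i<L. \<bar>d i\<bar>) \<le> 2 * (real n + 1)"
  proof -
    define D where "D = {i\<in>{..<L}. d i \<noteq> 0}"
    have "(\<Sum>i<L. \<bar>d i\<bar>) = (\<Sum>i\<in>D. \<bar>d i\<bar>)"
      unfolding D_def by (rule sum.mono_neutral_right) auto
    also have "\<dots> \<le> (\<Sum>i\<in>D. 2)"
    proof (rule sum_mono)
      fix i
      have "g i = 1 \<or> g i = -1 \<or> g i = 0" using g by (rule sp_vals)
      moreover have "g (i - 1) = 1 \<or> g (i - 1) = -1 \<or> g (i - 1) = 0" using g by (rule sp_vals)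
      ultimately show "\<bar>d i\<bar> \<le> 2" unfolding d_def by auto
    qed
    also have "\<dots> = 2 * real (card D)" by simp
    also have "card D \<le> n + 1"
    proof -
      have "D \<subseteq> {s, e} \<union> {i. s < i \<and> i < e \<and> g i \<noteq> g (i - 1)}"
      proof
        fix i assume "i \<in> D"
        then have di: "d i \<noteq> 0" unfolding D_def by blast
        show "i \<in> {s, e} \<union> {i. s < i \<and> i < e \<and> g i \<noteq> g (i - 1)}"
        proof (cases "i = s \<or> i = e")
          case True then show ?thesis by blast
        next
          case False
          then consider "i < s" | "s < i \<and> i < e" | "e < i" by linarith
          then show ?thesis
          proof cases
            case 1 then show ?thesis using di zero unfolding d_def by (auto split: if_splits)
          next
            case 2 then show ?thesis using di unfolding d_def by (auto split: if_splits)
          next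
            case 3
            then have "\<not> (s \<le> i - 1 \<and> i - 1 < e)" "\<not> (s \<le> i \<and> i < e)" by auto
            then have "g i = 0" "g (i - 1) = 0" using zero by blast+
            then show ?thesis using di unfolding d_def by (simp split: if_splits)
          qed
        qed
      qed
      moreover have "finite {i. s < i \<and> i < e \<and> g i \<noteq> g (i - 1)}"
        by (rule finite_subset[of _ "{..<e}"]) auto
      ultimately have "card D \<le> card ({s, e} \<union> {i. s < i \<and> i < e \<and> g i \<noteq> g (i - 1)})"
        by (intro card_mono) auto
      also have "\<dots> \<le> card {s, e} + card {i. s < i \<and> i < e \<and> g i \<noteq> g (i - 1)}"
        by (rule card_Un_le)
      also have "card {s, e} \<le> 2" by (simp add: card_insert_le_m1)
      finally show ?thesis using cC by linarith
    qed
    then have "2 * real (card D) \<le> 2 * (real n + 1)" by simp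
    finally show ?thesis .
  qed
  then have "(\<Sum>i<L. \<bar>d i\<bar>) * (K * norm v) \<le> 2 * (real n + 1) * (K * norm v)"
    using K(2) by (intro mult_right_mono) auto
  finally show ?thesis by (simp add: mult.assoc)
qed

end


lemma blk_exists:
  assumes "strict_mono (p :: nat \<Rightarrow> nat)" "p 0 \<le> i" "i < p n"
  shows "\<exists>k<n. p k \<le> i \<and> i < p (Suc k)"
  using assms(3)
proof (induction n)
  case 0 then show ?case using assms(2) by simp
next
  case (Suc n)
  show ?case
  proof (cases "i < p n")
    case True then show ?thesis using Suc.IH by (meson less_SucI)
  next
    case False then show ?thesis using Suc.prems by (intro exI[of _ n]) auto
  qed
qed

lemma blk_unique:
  assumes "strict_mono (p :: nat \<Rightarrow> nat)" "p k \<le> i" "i < p (Suc k)" "p k' \<le> i" "i < p (Suc k')"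
  shows "k = k'"
proof (rule ccontr)
  assume "k \<noteq> k'"
  then consider "Suc k \<le> k'" | "Suc k' \<le> k" by linarith
  then show False
  proof cases
    case 1 then have "p (Suc k) \<le> p k'" using assms(1) by (simp add: strict_mono_less_eq)
    then show False using assms by linarith
  next
    case 2 then have "p (Suc k') \<le> p k" using assms(1) by (simp add: strict_mono_less_eq)
    then show False using assms by linarith
  qed
qed

lemma blk_sum:
  assumes "strict_mono (p :: nat \<Rightarrow> nat)" "k0 < n" "p k0 \<le> i" "i < p (Suc k0)"
  shows "(\<Sum>k<n. if p k \<le> i \<and> i < p (Suc k) then f k else 0) = (f k0 :: real)"
proof -
  have "(\<Sum>k<n. if p k \<le> i \<and> i < p (Suc k) then f k else 0) = (\<Sum>k<n. if k = k0 then f k else 0)"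
  proof (rule sum.cong)
    fix k
    show "(if p k \<le> i \<and> i < p (Suc k) then f k else 0) = (if k = k0 then f k else 0)"
    proof (cases "k = k0")
      case True then show ?thesis using assms(3,4) by simp
    next
      case False
      then have "\<not> (p k \<le> i \<and> i < p (Suc k))" using blk_unique[OF assms(1) _ _ assms(3,4), of k] by blast
      then show ?thesis using False by auto
    qed
  qed simp
  also have "\<dots> = f k0" using assms(2) by simp
  finally show ?thesis .
qed

lemma blk_none:
  assumes "strict_mono (p :: nat \<Rightarrow> nat)" "\<not> (p 0 \<le> i \<and> i < p n)"
  shows "(\<Sum>k<n. if p k \<le> i \<and> i < p (Suc k) then f k else 0) = (0 :: real)"
proof (rule sum.neutral, rule ballI)
  fix k assume "k \<in> {..<n}"
  then have "p 0 \<le> p k" "p (Suc k) \<le> p n" using assms(1) by (simp_all add: strict_mono_less_eq)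
  then show "(if p k \<le> i \<and> i < p (Suc k) then f k else 0) = 0" using assms(2) by auto
qed

lemma sp_epsJ:
  assumes p: "strict_mono (p :: nat \<Rightarrow> nat)" and n: "n \<ge> 1" and eps: "\<forall>k<n. \<epsilon> k \<in> {-1, 1::real}"
  shows "sp n (\<lambda>i. \<Sum>k<n. if p k \<le> i \<and> i < p (Suc k) then \<epsilon> k else 0)"
proof -
  let ?E = "\<lambda>i. \<Sum>k<n. if p k \<le> i \<and> i < p (Suc k) then \<epsilon> k else 0"
  have v: "\<forall>i. p 0 \<le> i \<and> i < p n \<longrightarrow> ?E i = 1 \<or> ?E i = -1"
  proof (intro allI impI)
    fix i assume i: "p 0 \<le> i \<and> i < p n"
    then obtain k0 where k0: "k0 < n" "p k0 \<le> i" "i < p (Suc k0)" using blk_exists[OF p] by blast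
    then have "?E i = \<epsilon> k0" by (intro blk_sum[OF p])
    then show "?E i = 1 \<or> ?E i = -1" using eps k0 by auto
  qed
  have z: "\<forall>i. \<not> (p 0 \<le> i \<and> i < p n) \<longrightarrow> ?E i = 0"
    using blk_none[OF p] by blast
  have sub: "{i. p 0 < i \<and> i < p n \<and> ?E i \<noteq> ?E (i - 1)} \<subseteq> p ` {1..<n}"
  proof
    fix i assume "i \<in> {i. p 0 < i \<and> i < p n \<and> ?E i \<noteq> ?E (i - 1)}"
    then have i: "p 0 < i" "i < p n" "?E i \<noteq> ?E (i - 1)" by auto
    then obtain k0 where k0: "k0 < n" "p k0 \<le> i" "i < p (Suc k0)" using blk_exists[OF p, of i n] by auto
    have "p k0 = i"
    proof (rule ccontr)
      assume "p k0 \<noteq> i"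
      then have "p k0 \<le> i - 1" "i - 1 < p (Suc k0)" using k0 by auto
      then have "?E (i - 1) = \<epsilon> k0" using k0 by (intro blk_sum[OF p]) auto
      moreover have "?E i = \<epsilon> k0" using k0 by (intro blk_sum[OF p]) auto
      ultimately show False using i(3) by simp
    qed
    moreover have "k0 \<noteq> 0"
    proof
      assume "k0 = 0" then show False using \<open>p k0 = i\<close> i(1) by simp
    qed
    ultimately show "i \<in> p ` {1..<n}" using k0 by auto
  qed
  have "card {i. p 0 < i \<and> i < p n \<and> ?E i \<noteq> ?E (i - 1)} \<le> card (p ` {1..<n})"
    using sub by (intro card_mono) auto
  also have "\<dots> \<le> card {1..<n}" by (rule card_image_le) simp
  also have "\<dots> < n" using n by simp
  finally show ?thesis unfolding sp_def using v z by blast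
qed

context sbasis begin

lemma blk_expand:
  assumes p: "strict_mono (p :: nat \<Rightarrow> nat)"
    and y: "\<forall>k<n. y k = (\<Sum>i\<in>{p k..<p (Suc k)}. b i *\<^sub>R x i)"
  shows "(\<Sum>k<n. f k *\<^sub>R y k) =
    (\<Sum>i<p n. ((\<Sum>k<n. if p k \<le> i \<and> i < p (Suc k) then f k else 0) * b i) *\<^sub>R x i)"
proof -
  have "(\<Sum>k<n. f k *\<^sub>R y k) = (\<Sum>k<n. \<Sum>i<p n. (if p k \<le> i \<and> i < p (Suc k) then f k * b i else 0) *\<^sub>R x i)"
  proof (rule sum.cong)
    fix k assume "k \<in> {..<n}"
    then have "p (Suc k) \<le> p n" using p by (simp add: strict_mono_less_eq)
    then have sub: "{p k..<p (Suc k)} \<subseteq> {..<p n}" by auto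
    have "f k *\<^sub>R y k = (\<Sum>i\<in>{p k..<p (Suc k)}. (f k * b i) *\<^sub>R x i)"
      using y \<open>k \<in> {..<n}\<close> by (simp add: scaleR_sum_right)
    also have "\<dots> = (\<Sum>i<p n. (if p k \<le> i \<and> i < p (Suc k) then f k * b i else 0) *\<^sub>R x i)"
    proof (rule sum.mono_neutral_cong_left)
      show "finite {..<p n}" by simp
      show "{p k..<p (Suc k)} \<subseteq> {..<p n}" by (rule sub)
    qed auto
    finally show "f k *\<^sub>R y k = (\<Sum>i<p n. (if p k \<le> i \<and> i < p (Suc k) then f k * b i else 0) *\<^sub>R x i)" .
  qed simp
  also have "\<dots> = (\<Sum>i<p n. \<Sum>k<n. (if p k \<le> i \<and> i < p (Suc k) then f k * b i else 0) *\<^sub>R x i)"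
    by (rule sum.swap)
  also have "\<dots> = (\<Sum>i<p n. ((\<Sum>k<n. if p k \<le> i \<and> i < p (Suc k) then f k else 0) * b i) *\<^sub>R x i)"
  proof (rule sum.cong)
    fix i
    have "(\<Sum>k<n. (if p k \<le> i \<and> i < p (Suc k) then f k * b i else 0) *\<^sub>R x i)
        = (\<Sum>k<n. ((if p k \<le> i \<and> i < p (Suc k) then f k else 0) * b i) *\<^sub>R x i)"
      by (intro sum.cong) auto
    also have "\<dots> = ((\<Sum>k<n. if p k \<le> i \<and> i < p (Suc k) then f k else 0) * b i) *\<^sub>R x i"
      by (simp add: scaleR_sum_left sum_distrib_right)
    finally show "(\<Sum>k<n. (if p k \<le> i \<and> i < p (Suc k) then f k * b i else 0) *\<^sub>R x i)
        = ((\<Sum>k<n. if p k \<le> i \<and> i < p (Suc k) then f k else 0) * b i) *\<^sub>R x i" .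
  qed simp
  finally show ?thesis .
qed

end

context sbasis begin

definition Nn :: "nat \<Rightarrow> 'a \<Rightarrow> real" where
  "Nn n v = (SUP g\<in>{g. sp n g}. norm (Mop g v))"

lemma N_bdd: "bdd_above ((\<lambda>g. norm (Mop g v)) ` {g. sp n g})"
proof -
  obtain K where K: "K > 0" "\<And>m v. norm (S m v) \<le> K * norm v" using S_bound by blast
  have "norm (Mop g v) \<le> 2 * (real n + 1) * K * norm v" if "g \<in> {g. sp n g}" for g
    using sp_norm_bound[OF K(2) less_imp_le[OF K(1)]] that by blast
  then show ?thesis by (rule bdd_aboveI2)
qed

lemma N_upper: "sp n g \<Longrightarrow> norm (Mop g v) \<le> Nn n v"
  unfolding Nn_def by (rule cSUP_upper[OF _ N_bdd]) simp

lemma N_least: "n \<ge> 1 \<Longrightarrow> (\<And>g. sp n g \<Longrightarrow> norm (Mop g v) \<le> B) \<Longrightarrow> Nn n v \<le> B"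
  unfolding Nn_def by (rule cSUP_least) (use sp_zero in auto)

lemma N_ge_norm: assumes "n \<ge> 1" shows "norm v \<le> Nn n v"
proof -
  have "norm (S m v) \<le> Nn n v" for m
    using N_upper[OF sp_ind[OF assms, of m], of v] by (simp add: Mop_ind)
  moreover have "(\<lambda>m. norm (S m v)) \<longlonglongrightarrow> norm v" by (intro tendsto_norm S_conv)
  ultimately show ?thesis by (intro LIMSEQ_le_const2) auto
qed

lemma N_le: "\<exists>C>0. \<forall>v. Nn n v \<le> C * norm v" if "n \<ge> 1"
proof -
  obtain K where K: "K > 0" "\<And>m v. norm (S m v) \<le> K * norm v" using S_bound by blast
  show ?thesis
  proof (intro exI[of _ "2 * (real n + 1) * K"] conjI allI)
    show "0 < 2 * (real n + 1) * K" using K by simp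
    fix v show "Nn n v \<le> 2 * (real n + 1) * K * norm v"
      by (rule N_least[OF that]) (rule sp_norm_bound[OF K(2) less_imp_le[OF K(1)]])
  qed
qed

lemma N_triangle: "n \<ge> 1 \<Longrightarrow> Nn n (v + w) \<le> Nn n v + Nn n w"
  by (rule N_least) (auto simp: Mop_add_v intro: order_trans[OF norm_triangle_ineq] add_mono N_upper)

lemma N_scale: assumes "n \<ge> 1" shows "Nn n (c *\<^sub>R v) = \<bar>c\<bar> * Nn n v"
proof (rule antisym)
  show "Nn n (c *\<^sub>R v) \<le> \<bar>c\<bar> * Nn n v"
    by (rule N_least[OF assms]) (simp add: Mop_scale_v N_upper mult_left_mono)
  show "\<bar>c\<bar> * Nn n v \<le> Nn n (c *\<^sub>R v)"
  proof (cases "c = 0")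
    case True then show ?thesis using N_ge_norm[OF assms, of 0] by simp
  next
    case False
    have "Nn n v \<le> \<bar>inverse c\<bar> * Nn n (c *\<^sub>R v)"
    proof (rule N_least[OF assms])
      fix g assume g: "sp n g"
      have "norm (Mop g v) = \<bar>inverse c\<bar> * norm (Mop g (c *\<^sub>R v))"
        using False by (simp add: Mop_scale_v abs_inverse)
      also have "\<dots> \<le> \<bar>inverse c\<bar> * Nn n (c *\<^sub>R v)" by (intro mult_left_mono N_upper g) simp
      finally show "norm (Mop g v) \<le> \<bar>inverse c\<bar> * Nn n (c *\<^sub>R v)" .
    qed
    then show ?thesis using False by (simp add: field_simps abs_inverse)
  qed
qed

lemma N_zero: "n \<ge> 1 \<Longrightarrow> Nn n 0 = 0"
  using N_scale[of n 0 0] by simp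

lemma N_equiv: "n \<ge> 1 \<Longrightarrow> equivalent_norm (Nn n)"
proof -
  assume n: "n \<ge> 1"
  have "is_norm (Nn n)"
    unfolding is_norm_def
  proof (intro conjI allI)
    fix v show "0 \<le> Nn n v" using N_ge_norm[OF n, of v] norm_ge_zero order_trans by blast
    show "(Nn n v = 0) = (v = 0)"
      using N_ge_norm[OF n, of v] N_zero[OF n] by auto
  next
    fix c v show "Nn n (c *\<^sub>R v) = \<bar>c\<bar> * Nn n v" by (rule N_scale[OF n])
  next
    fix v w show "Nn n (v + w) \<le> Nn n v + Nn n w" by (rule N_triangle[OF n])
  qed
  moreover obtain C where "C > 0" "\<forall>v. Nn n v \<le> C * norm v" using N_le[OF n] by blast
  ultimately show ?thesis unfolding equivalent_norm_def
    using N_ge_norm[OF n] by (intro conjI exI[of _ 1] exI[of _ C]) auto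
qed

lemma N_uncond:
  assumes n: "n \<ge> 1" and y: "block_basis_of x n y" and eps: "\<forall>k<n. \<epsilon> k \<in> {-1, 1}"
  shows "Nn n (\<Sum>k<n. (\<epsilon> k * a k) *\<^sub>R y k) \<le> 2 * Nn n (\<Sum>k<n. a k *\<^sub>R y k)"
proof -
  obtain p b where p: "strict_mono (p :: nat \<Rightarrow> nat)"
    and yk: "\<forall>k<n. y k = (\<Sum>i\<in>{p k..<p (Suc k)}. b i *\<^sub>R x i)"
    using y unfolding block_basis_of_def by blast
  define P where "P = p n"
  define A where "A i = (\<Sum>k<n. if p k \<le> i \<and> i < p (Suc k) then a k else 0)" for i
  define EA where "EA i = (\<Sum>k<n. if p k \<le> i \<and> i < p (Suc k) then \<epsilon> k * a k else 0)" for i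
  define E where "E i = (\<Sum>k<n. if p k \<le> i \<and> i < p (Suc k) then \<epsilon> k else 0)" for i
  define z where "z = (\<Sum>k<n. a k *\<^sub>R y k)"
  define w where "w = (\<Sum>k<n. (\<epsilon> k * a k) *\<^sub>R y k)"
  have z: "z = (\<Sum>i<P. (A i * b i) *\<^sub>R x i)"
    unfolding z_def A_def P_def by (rule blk_expand[OF p yk])
  have w: "w = (\<Sum>i<P. (EA i * b i) *\<^sub>R x i)"
    unfolding w_def EA_def P_def by (rule blk_expand[OF p yk])
  have EA: "EA i = E i * A i" for i
  proof (cases "p 0 \<le> i \<and> i < p n")
    case True
    then obtain k0 where k0: "k0 < n" "p k0 \<le> i" "i < p (Suc k0)" using blk_exists[OF p] by blast
    show ?thesis unfolding EA_def E_def A_def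
      using blk_sum[OF p k0, of "\<lambda>k. \<epsilon> k * a k"] blk_sum[OF p k0, of \<epsilon>] blk_sum[OF p k0, of a] by simp
  next
    case False
    show ?thesis unfolding EA_def E_def A_def
      using blk_none[OF p False, of "\<lambda>k. \<epsilon> k * a k"] blk_none[OF p False, of \<epsilon>] by simp
  qed
  have EP: "\<forall>i\<ge>P. E i = 0"
  proof (intro allI impI)
    fix i assume "P \<le> i"
    then have "\<not> (p 0 \<le> i \<and> i < p n)" unfolding P_def by simp
    then show "E i = 0" unfolding E_def by (rule blk_none[OF p])
  qed
  have cz: "coef z = (\<lambda>i. if i \<in> {..<P} then A i * b i else 0)" unfolding z by (rule coef_fin) simp
  have wM: "w = Mop E z"
  proof -
    have "Mop E z = (\<Sum>i<P. (E i * coef z i) *\<^sub>R x i)" by (rule Mop_eq[OF EP])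
    also have "\<dots> = (\<Sum>i<P. (EA i * b i) *\<^sub>R x i)" by (intro sum.cong) (simp_all add: cz EA)
    finally show ?thesis using w by simp
  qed
  have spE: "sp n E" unfolding E_def by (rule sp_epsJ[OF p n eps])
  have "Nn n w \<le> Nn n z + Nn n z"
  proof (rule N_least[OF n])
    fix g assume g: "sp n g"
    obtain h1 h2 where h: "sp n h1" "sp n h2" "\<forall>i. g i * E i = h1 i + h2 i"
      using sp_prod_split[OF g spE] by blast
    obtain L1 where L1: "\<forall>i\<ge>L1. g i = 0" using sp_bound[OF g] by blast
    obtain L2 where L2: "\<forall>i\<ge>L2. h1 i = 0" using sp_bound[OF h(1)] by blast
    obtain L3 where L3: "\<forall>i\<ge>L3. h2 i = 0" using sp_bound[OF h(2)] by blast
    define L where "L = L1 + L2 + L3 + P"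
    have gL: "\<forall>i\<ge>L. g i = 0" using L1 unfolding L_def by auto
    have h1L: "\<forall>i\<ge>L. h1 i = 0" using L2 unfolding L_def by auto
    have h2L: "\<forall>i\<ge>L. h2 i = 0" using L3 unfolding L_def by auto
    have EL: "\<forall>i\<ge>L. E i = 0" using EP unfolding L_def by auto
    have "Mop g w = Mop (\<lambda>i. g i * E i) z" unfolding wM by (rule Mop_comp[OF gL EL])
    also have "(\<lambda>i. g i * E i) = (\<lambda>i. h1 i + h2 i)" using h(3) by auto
    also have "Mop (\<lambda>i. h1 i + h2 i) z = Mop h1 z + Mop h2 z" by (rule Mop_sum[OF h1L h2L])
    finally have "norm (Mop g w) \<le> norm (Mop h1 z) + norm (Mop h2 z)" by (simp add: norm_triangle_ineq)
    also have "\<dots> \<le> Nn n z + Nn n z" by (intro add_mono N_upper h(1,2))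
    finally show "norm (Mop g w) \<le> Nn n z + Nn n z" .
  qed
  then show ?thesis unfolding w_def z_def by simp
qed

end

theorem lemma2p2:
  fixes x :: "nat \<Rightarrow> 'a::banach"
  assumes "schauder_basis x"
  shows "\<forall>n::nat. \<exists>N::'a \<Rightarrow> real. equivalent_norm N \<and> block_n_unconditional N x n 2"
proof
  fix n :: nat
  interpret sbasis x using assms by unfold_locales
  show "\<exists>N::'a \<Rightarrow> real. equivalent_norm N \<and> block_n_unconditional N x n 2"
  proof (cases "n = 0")
    case True
    have "equivalent_norm (norm :: 'a \<Rightarrow> real)"
      unfolding equivalent_norm_def is_norm_def
      by (auto intro!: exI[of _ 1] norm_triangle_ineq)
    moreover have "block_n_unconditional norm x n 2"
      unfolding block_n_unconditional_def using True by simp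
    ultimately show ?thesis by blast
  next
    case False
    then have n: "n \<ge> 1" by simp
    have "block_n_unconditional (Nn n) x n 2"
      unfolding block_n_unconditional_def using N_uncond[OF n] by blast
    then show ?thesis using N_equiv[OF n] by blast
  qed
qed



end
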